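(* Let $d\ge2$, $m\ge2$, and let $\mathbf{x}_1,\dots,\mathbf{x}_m$ be i.i.d. samples from $\mathrm{Unif}(\mathcal{X}_d)$. Then for $0<\eta<1$, $$\mathbb{P}\Big(\min_{i\ne j}\|\mathbf{x}_i-\mathbf{x}_j\|_2\le\eta\Big)<m^2\eta^{d-1}.$$
   Context: $\mathcal{X}_d=\mathbb{S}^{d-1}\times\mathbb{S}^{d-1}\subset\mathbb{R}^{2d}$. *)

theory Defs
  imports "HOL-Probability.Probability"
begin

text \<open>Uniform (normalised surface) measure on the unit sphere S^{d-1} in R^d, d = CARD('n):
  the law of x / |x| for x uniform on the open unit ball (cone-measure construction;
  the library has no surface measure).\<close>
definition unif_sphere :: "(real^'n::finite) measure" where
  "unif_sphere = distr (uniform_measure lborel (ball 0 1)) borel (\<lambda>x. x /\<^sub>R norm x)"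

text \<open>Uniform distribution on X_d = S^{d-1} x S^{d-1}, viewed in R^{2d}; the product
  type carries the Euclidean distance sqrt(|u-u'|^2 + |v-v'|^2).\<close>
definition unif_X :: "((real^'n::finite) \<times> (real^'n)) measure" where
  "unif_X = unif_sphere \<Otimes>\<^sub>M unif_sphere"

end

theory Submission
  imports Defs
begin


typedef ('a::finite) idx = "{..<CARD('a)}"
  by (rule exI[of _ 0]) (simp add: finite_UNIV_card_ge_0)

instantiation idx :: (finite) linorder
begin
definition less_eq_idx :: "'a idx \<Rightarrow> 'a idx \<Rightarrow> bool" where "less_eq_idx x y \<longleftrightarrow> Rep_idx x \<le> Rep_idx y"
definition less_idx :: "'a idx \<Rightarrow> 'a idx \<Rightarrow> bool" where "less_idx x y \<longleftrightarrow> Rep_idx x < Rep_idx y"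
instance proof
  fix x y z :: "'a idx"
  show "(x < y) = (x \<le> y \<and> \<not> y \<le> x)" by (auto simp: less_eq_idx_def less_idx_def)
  show "x \<le> x" by (simp add: less_eq_idx_def)
  show "x \<le> y \<Longrightarrow> y \<le> z \<Longrightarrow> x \<le> z" by (simp add: less_eq_idx_def)
  show "x \<le> y \<Longrightarrow> y \<le> x \<Longrightarrow> x = y" by (simp add: less_eq_idx_def Rep_idx_inject[symmetric])
  show "x \<le> y \<or> y \<le> x" by (auto simp add: less_eq_idx_def)
qed
end

lemma finite_idx: "finite (UNIV :: 'a::finite idx set)"
proof -
  have "bij_betw Rep_idx (UNIV :: 'a idx set) {..<CARD('a)}"
    by (metis Rep_idx_inject bij_betw_def inj_onI type_definition.Rep_range type_definition_idx)
  then show ?thesis using bij_betw_finite by blast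
qed

instance idx :: (finite) finite by standard (rule finite_idx)

instance idx :: (finite) wellorder
proof
  fix P :: "'a idx \<Rightarrow> bool" and a :: "'a idx"
  assume h: "\<And>x. (\<And>y. y < x \<Longrightarrow> P y) \<Longrightarrow> P x"
  show "P a"
    by (induction a rule: measure_induct_rule[where f=Rep_idx]) (rule h, simp add: less_idx_def)
qed

lemma card_idx: "CARD('a::finite idx) = CARD('a)"
proof -
  have "bij_betw Rep_idx (UNIV :: 'a idx set) {..<CARD('a)}"
    by (metis Rep_idx_inject bij_betw_def inj_onI type_definition.Rep_range type_definition_idx)
  then show ?thesis by (simp add: bij_betw_same_card)
qed

lemma Basis_vec_real: "(Basis :: (real^'n) set) = range (\<lambda>i. axis i 1)"
  by (auto simp: Basis_vec_def)

lemma prod_Basis_vec: "(\<Prod>b\<in>(Basis::(real^'n) set). g b) = (\<Prod>i\<in>UNIV. g (axis i 1))"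
  unfolding Basis_vec_real
  by (subst prod.reindex) (auto simp: inj_on_def axis_eq_axis)

lemma box_prod_vec: "(\<Prod>b\<in>(Basis::(real^'n) set). (u - l) \<bullet> b) = (\<Prod>i\<in>UNIV. u$i - l$i)"
  by (simp add: prod_Basis_vec inner_axis)

lemma box_le_vec: "(\<forall>b\<in>(Basis::(real^'n) set). l \<bullet> b \<le> u \<bullet> b) \<longleftrightarrow> (\<forall>i. l$i \<le> u$i)"
  by (simp add: Basis_vec_real inner_axis)

lemma lborel_vec_perm:
  fixes h :: "'n::finite \<Rightarrow> 'm::finite"
  assumes h: "bij h"
  shows "distr lborel borel (\<lambda>x::real^'m. \<chi> i. x $ h i) = (lborel :: (real^'n) measure)"
proof (rule lborel_eqI[symmetric])
  let ?Q = "\<lambda>x::real^'m. (\<chi> i. x $ h i) :: real^'n"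
  have mQ: "?Q \<in> borel_measurable borel"
    by (intro borel_measurable_continuous_onI continuous_intros)
  fix l u :: "real^'n"
  assume le: "\<And>b. b \<in> Basis \<Longrightarrow> l \<bullet> b \<le> u \<bullet> b"
  then have le': "\<And>i. l$i \<le> u$i" using box_le_vec by blast
  let ?l = "(\<chi> j. l $ inv h j) :: real^'m" and ?u = "(\<chi> j. u $ inv h j) :: real^'m"
  have pre: "?Q -` box l u = box ?l ?u"
  proof -
    have "x \<in> ?Q -` box l u \<longleftrightarrow> x \<in> box ?l ?u" for x
    proof -
      have "x \<in> ?Q -` box l u \<longleftrightarrow> (\<forall>i. l$i < x$(h i) \<and> x$(h i) < u$i)"
        by (simp add: mem_box_cart)
      also have "\<dots> \<longleftrightarrow> (\<forall>j. l$(inv h j) < x$j \<and> x$j < u$(inv h j))"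
        by (metis h bij_inv_eq_iff)
      finally show ?thesis by (simp add: mem_box_cart)
    qed
    then show ?thesis by blast
  qed
  have "emeasure (distr lborel borel ?Q) (box l u) = emeasure lborel (box ?l ?u)"
    using mQ by (simp add: emeasure_distr pre)
  also have "\<dots> = (\<Prod>j\<in>UNIV. u $ inv h j - l $ inv h j)"
    using le' by (simp add: emeasure_lborel_box_eq box_le_vec box_prod_vec)
  also have "\<dots> = (\<Prod>i\<in>UNIV. u$i - l$i)"
    using prod.reindex_bij_betw[of "inv h" UNIV UNIV "\<lambda>i. u$i - l$i"] h
    by (simp add: bij_betw_inv_into bij_imp_bij_inv)
  finally show "emeasure (distr lborel borel ?Q) (box l u) = (\<Prod>b\<in>Basis. (u - l) \<bullet> b)"
    by (simp add: box_prod_vec)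
qed simp

lemma norm2_vec: "norm (x::real^'n)^2 = (\<Sum>i\<in>UNIV. (x$i)^2)"
  unfolding power2_norm_eq_inner inner_vec_def by (simp add: power2_eq_square)

lemma norm_diff_sq: "norm (a - b)^2 = norm a^2 - 2*(a \<bullet> b) + norm (b::'a::real_inner)^2"
  by (simp add: power2_norm_eq_inner inner_diff_left inner_diff_right inner_commute)

lemma cap_e_in_ellipsoid:
  fixes y :: "real^'n" and \<eta> \<beta> :: real
  assumes y1: "norm y < 1" and yd: "dist (y /\<^sub>R norm y) (axis k 1) \<le> \<eta>" and "0 < \<eta>" "\<eta> < 1"
    and \<beta>: "\<beta> = sqrt (9/8*(\<eta>^2 - \<eta>^4/4))"
  shows "\<exists>z. norm z \<le> 1 \<and> y = (1/2) *\<^sub>R axis k 1 + (\<chi> i. (if i = k then 3/2 else \<beta>) * z$i)"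
proof -
  define r where "r = norm y"
  define s where "s = y $ k"
  define a where "a = 1 - \<eta>^2/2"
  have e2: "\<eta>^2 < 1" using assms by (simp add: abs_square_less_1)
  have e4: "\<eta>^4 = (\<eta>^2)^2" by simp
  have a0: "0 < a" "a < 1" using e2 assms by (auto simp: a_def)
  have oa: "1 - a^2 = \<eta>^2 - \<eta>^4/4" by (simp add: a_def power2_eq_square e4 algebra_simps)
  have t0: "0 < \<eta>^2 - \<eta>^4/4"
  proof -
    have "0 < \<eta>^2" using assms by simp
    moreover have "(\<eta>^2)^2 < \<eta>^2" using mult_strict_right_mono[OF e2 \<open>0 < \<eta>^2\<close>] by (simp add: power2_eq_square)
    ultimately show ?thesis using e4 by linarith
  qed
  have b2: "\<beta>^2 = 9/8*(1 - a^2)" using \<beta> t0 oa by simp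
  have bpos: "\<beta> > 0" using \<beta> t0 by simp
  have y0: "y \<noteq> 0"
  proof
    assume "y = 0" then have "dist (y /\<^sub>R norm y) (axis k 1) = 1" by (simp add: dist_norm)
    then show False using yd assms by simp
  qed
  then have rpos: "r > 0" by (simp add: r_def)
  have "dist (y /\<^sub>R norm y) (axis k 1) ^2 = 2 - 2 * s / r"
  proof -
    have "dist (y /\<^sub>R norm y) (axis k 1) ^2 = norm (y /\<^sub>R r) ^2 - 2 * ((y /\<^sub>R r) \<bullet> axis k 1) + norm (axis k (1::real))^2"
      unfolding dist_norm r_def by (rule norm_diff_sq)
    moreover have "norm (y /\<^sub>R r) = 1" using rpos by (simp add: r_def)
    moreover have "(y /\<^sub>R r) \<bullet> axis k 1 = s / r" by (simp add: inner_axis s_def divide_inverse mult.commute)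
    ultimately show ?thesis by simp
  qed
  moreover have "dist (y /\<^sub>R norm y) (axis k 1) ^2 \<le> \<eta>^2" using yd by (simp add: power_mono)
  ultimately have "2 - 2 * s / r \<le> \<eta>^2" by simp
  then have sa: "s \<ge> r * a" using rpos by (simp add: a_def field_simps)
  have sr: "s \<le> r" using component_le_norm_cart[of y k] by (simp add: s_def r_def)
  have r1: "r < 1" using y1 r_def by simp
  have sum_rest: "(\<Sum>i\<in>UNIV-{k}. (y$i)^2) = r^2 - s^2"
    using norm2_vec[of y] sum.remove[of UNIV k "\<lambda>i. (y$i)^2"] by (simp add: r_def s_def)
  define z :: "real^'n" where "z = (\<chi> i. if i = k then (y$k - 1/2) / (3/2) else y$i / \<beta>)"
  have eq: "y = (1/2) *\<^sub>R axis k 1 + (\<chi> i. (if i = k then 3/2 else \<beta>) * z$i)"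
    using bpos by (simp add: vec_eq_iff z_def axis_def field_simps)
  have "norm z ^2 = ((s - 1/2)/(3/2))^2 + (\<Sum>i\<in>UNIV-{k}. (y$i)^2) / \<beta>^2"
  proof -
    have "norm z ^2 = (z$k)^2 + (\<Sum>i\<in>UNIV-{k}. (z$i)^2)"
      using norm2_vec[of z] sum.remove[of UNIV k "\<lambda>i. (z$i)^2"] by simp
    also have "(\<Sum>i\<in>UNIV-{k}. (z$i)^2) = (\<Sum>i\<in>UNIV-{k}. (y$i)^2 / \<beta>^2)"
      by (rule sum.cong) (auto simp: z_def power_divide)
    finally show ?thesis by (simp add: z_def s_def sum_divide_distrib)
  qed
  also have "\<dots> \<le> 1"
  proof -
    have s0: "0 \<le> s" using sa rpos a0 by (smt (verit) mult_pos_pos)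
    have t1: "((s - 1/2)/(3/2))^2 \<le> 1/9"
    proof -
      have "\<bar>s - 1/2\<bar> \<le> 1/2" using s0 sr r1 unfolding abs_le_iff by linarith
      then have "(s - 1/2)^2 \<le> (1/2)^2" using abs_le_square_iff[of "s-1/2" "1/2"] by simp
      then have "(s - 1/2)^2 / (3/2)^2 \<le> (1/2)^2 / (3/2)^2" by (rule divide_right_mono) simp
      then show ?thesis by (simp only: power_divide) (simp add: power2_eq_square)
    qed
    have "r^2 - s^2 \<le> r^2 * (1 - a^2)"
    proof -
      have "(r*a)^2 \<le> s^2" using sa rpos a0 by (intro power_mono) auto
      then show ?thesis by (simp add: algebra_simps power_mult_distrib)
    qed
    also have "\<dots> \<le> 1 - a^2" using r1 rpos a0
      by (intro mult_left_le_one_le) (auto simp: power_le_one_iff abs_square_le_1)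
    finally have "(r^2 - s^2) / \<beta>^2 \<le> (1 - a^2) / \<beta>^2" using bpos by (simp add: divide_right_mono)
    also have "\<dots> = 8/9" using b2 bpos by (simp add: field_simps)
    finally have h: "(r^2 - s^2) / \<beta>^2 \<le> 8/9" .
    show ?thesis unfolding sum_rest using t1 h by linarith
  qed
  finally have "norm z \<le> 1" by (simp add: power_le_one_iff)
  with eq show ?thesis by blast
qed


lemma measure_cball_ball: "measure lebesgue (cball (c::'a::euclidean_space) r) = measure lebesgue (ball c r)"
proof -
  have "ball c r - cball c r \<union> (cball c r - ball c r) = sphere c r"
    by auto
  then show ?thesis
    using negligible_sphere[of c r] by (intro measure_negligible_symdiff) simp_all
qed

lemma det_diag_L:
  fixes k :: "'m::finite" and \<beta> :: real
  shows "det (matrix (\<lambda>z::real^'m. \<chi> i. (if i = k then 3/2 else \<beta>) * z$i)) = 3/2 * \<beta>^(CARD('m) - 1)"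
proof -
  let ?c = "\<lambda>i. (if i = k then 3/2 else \<beta>)"
  have "det (matrix (\<lambda>z::real^'m. \<chi> i. ?c i * z$i)) = (\<Prod>i\<in>UNIV. matrix (\<lambda>z::real^'m. \<chi> i. ?c i * z$i) $ i $ i)"
    by (rule det_diagonal) (simp add: matrix_def axis_def)
  also have "\<dots> = (\<Prod>i\<in>UNIV. ?c i)" by (simp add: matrix_def axis_def)
  also have "\<dots> = ?c k * (\<Prod>i\<in>UNIV-{k}. ?c i)" using prod.remove[of UNIV k ?c] by simp
  also have "(\<Prod>i\<in>UNIV-{k}. ?c i) = (\<Prod>i\<in>UNIV-{k}. \<beta>)" by (rule prod.cong) auto
  also have "\<dots> = \<beta>^(CARD('m) - 1)" by (simp add: card_Diff_singleton)
  finally show ?thesis by simp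
qed

lemma cap_bound_wo:
  fixes w :: "(real,'m::{finite,wellorder}) vec" and \<eta> \<beta> :: real
  assumes w: "norm w = 1" and e: "0 < \<eta>" "\<eta> < 1" and \<beta>: "\<beta> = sqrt (9/8*(\<eta>^2 - \<eta>^4/4))"
  shows "measure lebesgue {x \<in> ball 0 1. dist (x /\<^sub>R norm x) w \<le> \<eta>}
           \<le> 3/2 * \<beta>^(CARD('m) - 1) * measure lebesgue (ball (0::(real,'m) vec) 1)"
proof -
  obtain k :: 'm where True by blast
  have b0: "0 \<le> \<beta>"
  proof -
    have e2: "\<eta>^2 \<le> 1" using e by (simp add: abs_square_le_1)
    have "\<eta>^4 = \<eta>^2 * \<eta>^2" by simp
    also have "\<dots> \<le> \<eta>^2 * 1" by (rule mult_left_mono[OF e2]) simp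
    finally have "\<eta>^4 \<le> \<eta>^2" by simp
    moreover have "0 \<le> \<eta>^2" by simp
    ultimately have "0 \<le> \<eta>^2 - \<eta>^4/4" by linarith
    then have "0 \<le> 9/8*(\<eta>^2 - \<eta>^4/4)" by simp
    then show ?thesis using \<beta> by simp
  qed
  define e where "e = axis k (1::real)"
  have ne: "norm e = norm w" using w by (simp add: e_def)
  obtain T where T: "orthogonal_transformation T" "T e = w"
    using orthogonal_transformation_exists[OF ne] by blast
  have linT: "linear T" using T orthogonal_transformation_linear by blast
  define L where "L = (\<lambda>z. \<chi> i. (if i = k then 3/2 else \<beta>) * z$i)"
  have linL: "linear L" by (rule linearI) (simp_all add: L_def vec_eq_iff algebra_simps)
  define c0 where "c0 = T ((1/2) *\<^sub>R e)"
  define E where "E = (+) c0 ` ((T \<circ> L) ` cball 0 1)"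
  define C where "C = {x \<in> ball 0 1. dist (x /\<^sub>R norm x) w \<le> \<eta>}"
  have sub: "C \<subseteq> E"
  proof
    fix x assume x: "x \<in> C"
    obtain y where y: "x = T y" using orthogonal_transformation_surj[OF T(1)] by (metis surjD)
    have ny: "norm y = norm x" using y T orthogonal_transformation_norm by metis
    have "T (y /\<^sub>R norm y) = x /\<^sub>R norm x" using y ny orthogonal_transformation_scaleR[OF T(1)] by simp
    then have "dist (x /\<^sub>R norm x) w = norm (T (y /\<^sub>R norm y) - T e)" using T(2) by (simp add: dist_norm)
    also have "\<dots> = norm (T (y /\<^sub>R norm y - e))" by (simp add: linear_diff[OF linT])
    also have "\<dots> = norm (y /\<^sub>R norm y - e)" by (rule orthogonal_transformation_norm[OF T(1)])
    finally have "dist (y /\<^sub>R norm y) e = dist (x /\<^sub>R norm x) w" by (simp add: dist_norm)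
    then have yd: "dist (y /\<^sub>R norm y) (axis k 1) \<le> \<eta>" using x by (simp add: C_def e_def)
    have y1: "norm y < 1" using x ny by (simp add: C_def)
    obtain z where z: "norm z \<le> 1" "y = (1/2) *\<^sub>R axis k 1 + L z"
      using cap_e_in_ellipsoid[OF y1 yd e \<beta>] unfolding L_def by blast
    have "x = c0 + (T \<circ> L) z" using y z linT by (simp add: c0_def e_def linear_add)
    then show "x \<in> E" using z by (auto simp: E_def)
  qed
  have Cm: "C \<in> sets lebesgue"
  proof -
    have "C \<in> sets borel" unfolding C_def by measurable
    then show ?thesis by (simp add: sets_completionI_sets)
  qed
  have linTL: "linear (T \<circ> L)" using linT linL by (simp add: linear_compose)
  have Em: "E \<in> lmeasurable" unfolding E_def
    by (intro measurable_translation measurable_linear_image linTL lmeasurable_cball)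
  have "measure lebesgue E = \<bar>det (matrix (T \<circ> L))\<bar> * measure lebesgue (cball (0::(real,'m) vec) 1)"
    unfolding E_def measure_translation by (rule measure_linear_image[OF linTL lmeasurable_cball])
  also have "\<bar>det (matrix (T \<circ> L))\<bar> = 3/2 * \<beta>^(CARD('m) - 1)"
  proof -
    have "\<bar>det (matrix (T \<circ> L))\<bar> = \<bar>det (matrix T)\<bar> * \<bar>det (matrix L)\<bar>"
      by (simp add: matrix_compose[OF linL linT] det_mul abs_mult)
    also have "\<dots> = \<bar>det (matrix L)\<bar>" using T by simp
    also have "\<dots> = 3/2 * \<beta>^(CARD('m) - 1)" unfolding L_def det_diag_L using b0 by simp
    finally show ?thesis .
  qed
  finally have "measure lebesgue E = 3/2 * \<beta>^(CARD('m) - 1) * measure lebesgue (ball (0::(real,'m) vec) 1)"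
    by (simp add: measure_cball_ball)
  moreover have "measure lebesgue C \<le> measure lebesgue E"
    by (rule measure_mono_fmeasurable[OF sub Cm Em])
  ultimately show ?thesis by (simp add: C_def)
qed


lemma norm_perm_vec:
  fixes h :: "'n::finite \<Rightarrow> 'm::finite"
  assumes h: "bij h"
  shows "norm ((\<chi> i. x $ h i) :: (real,'n) vec) = norm (x :: (real,'m) vec)"
proof -
  have "norm ((\<chi> i. x $ h i) :: (real,'n) vec)^2 = (\<Sum>i\<in>UNIV. (x $ h i)^2)" by (simp add: norm2_vec)
  also have "\<dots> = (\<Sum>j\<in>UNIV. (x $ j)^2)"
    using sum.reindex_bij_betw[of h UNIV UNIV "\<lambda>j. (x $ j)^2"] h by simp
  also have "\<dots> = norm x ^2" by (simp add: norm2_vec)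
  finally show ?thesis by (simp add: power2_eq_iff_nonneg)
qed

lemma cap_bound:
  fixes w :: "(real,'n::finite) vec" and \<eta> \<beta> :: real
  assumes w: "norm w = 1" and e: "0 < \<eta>" "\<eta> < 1" and \<beta>: "\<beta> = sqrt (9/8*(\<eta>^2 - \<eta>^4/4))"
  shows "measure lborel {x \<in> ball 0 1. dist (x /\<^sub>R norm x) w \<le> \<eta>}
           \<le> 3/2 * \<beta>^(CARD('n) - 1) * measure lborel (ball (0::(real,'n) vec) 1)"
proof -
  obtain h :: "'n \<Rightarrow> 'n idx" where h: "bij h"
    using finite_same_card_bij[of "UNIV :: 'n set" "UNIV :: 'n idx set"] card_idx[where 'a='n]
    by (auto simp: bij_betw_def)
  define Q :: "(real,'n idx) vec \<Rightarrow> (real,'n) vec" where "Q = (\<lambda>x. \<chi> i. x $ h i)"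
  have mQ: "Q \<in> borel_measurable borel" unfolding Q_def
    by (intro borel_measurable_continuous_onI continuous_intros)
  have mQ': "Q \<in> measurable lborel borel" using mQ by simp
  have lb: "distr lborel borel Q = lborel" unfolding Q_def by (rule lborel_vec_perm[OF h])
  have tr: "measure lborel A = measure lborel (Q -` A)" if "A \<in> sets borel" for A
  proof -
    have "measure lborel A = measure (distr lborel borel Q) A" using lb by simp
    also have "\<dots> = measure lborel (Q -` A \<inter> space lborel)" by (rule measure_distr[OF mQ' that])
    finally show ?thesis by simp
  qed
  have nQ: "norm (Q x) = norm x" for x unfolding Q_def by (rule norm_perm_vec[OF h])
  have linQ: "linear Q" unfolding Q_def by (rule linearI) (simp_all add: vec_eq_iff)
  define w' :: "(real,'n idx) vec" where "w' = (\<chi> j. w $ inv h j)"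
  have Qw: "Q w' = w" unfolding Q_def w'_def using h by (simp add: vec_eq_iff bij_is_inj)
  have nw': "norm w' = 1" using nQ[of w'] Qw w by simp
  have pre: "Q -` {x \<in> ball 0 1. dist (x /\<^sub>R norm x) w \<le> \<eta>} = {x \<in> ball 0 1. dist (x /\<^sub>R norm x) w' \<le> \<eta>}"
  proof -
    have "dist (Q x /\<^sub>R norm (Q x)) w = dist (x /\<^sub>R norm x) w'" for x
    proof -
      have "dist (Q x /\<^sub>R norm (Q x)) w = norm (Q (x /\<^sub>R norm x) - Q w')"
        by (simp add: dist_norm nQ Qw linear_scale[OF linQ])
      also have "\<dots> = norm (Q (x /\<^sub>R norm x - w'))" by (simp add: linear_diff[OF linQ])
      also have "\<dots> = dist (x /\<^sub>R norm x) w'" by (simp add: nQ dist_norm)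
      finally show ?thesis .
    qed
    then show ?thesis by (auto simp: nQ)
  qed
  have preB: "Q -` ball 0 1 = ball 0 1" by (auto simp: nQ)
  have C1: "{x::(real,'n) vec. x \<in> ball 0 1 \<and> dist (x /\<^sub>R norm x) w \<le> \<eta>} \<in> sets borel" by measurable
  have C2: "{x::(real,'n idx) vec. x \<in> ball 0 1 \<and> dist (x /\<^sub>R norm x) w' \<le> \<eta>} \<in> sets borel" by measurable
  have "measure lborel {x \<in> ball 0 1. dist (x /\<^sub>R norm x) w \<le> \<eta>}
        = measure lborel {x::(real,'n idx) vec. x \<in> ball 0 1 \<and> dist (x /\<^sub>R norm x) w' \<le> \<eta>}"
    using tr[OF C1] pre by simp
  also have "\<dots> = measure lebesgue {x::(real,'n idx) vec. x \<in> ball 0 1 \<and> dist (x /\<^sub>R norm x) w' \<le> \<eta>}"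
    using C2 by simp
  also have "\<dots> \<le> 3/2 * \<beta>^(CARD('n idx) - 1) * measure lebesgue (ball (0::(real,'n idx) vec) 1)"
    by (rule cap_bound_wo[OF nw' e \<beta>])
  also have "measure lebesgue (ball (0::(real,'n idx) vec) 1) = measure lborel (ball (0::(real,'n idx) vec) 1)"
    by simp
  also have "\<dots> = measure lborel (ball (0::(real,'n) vec) 1)"
    using tr[of "ball 0 1"] preB by simp
  finally show ?thesis by (simp add: card_idx)
qed



lemma ball_measure_pos: "0 < measure lborel (ball (0::(real,'n::finite) vec) 1)"
  by (rule content_ball_pos) simp

lemma ball_emeasure: "emeasure lborel (ball (0::(real,'n::finite) vec) 1) \<noteq> 0"
  "emeasure lborel (ball (0::(real,'n::finite) vec) 1) \<noteq> \<infinity>"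
proof -
  show fin: "emeasure lborel (ball (0::(real,'n::finite) vec) 1) \<noteq> \<infinity>"
    using emeasure_lborel_ball_finite by (simp add: less_top)
  show "emeasure lborel (ball (0::(real,'n::finite) vec) 1) \<noteq> 0"
    using ball_measure_pos[where 'n='n] fin by (simp add: emeasure_eq_ennreal_measure)
qed

lemma prob_B: "prob_space (uniform_measure lborel (ball (0::(real,'n::finite) vec) 1))"
  by (rule prob_space_uniform_measure[OF ball_emeasure])

lemma meas_f_B: "(\<lambda>x::(real,'n::finite) vec. x /\<^sub>R norm x) \<in> measurable (uniform_measure lborel (ball 0 1)) borel"
  by (simp add: measurable_cong_sets[OF sets_uniform_measure refl])

lemma prob_S: "prob_space (unif_sphere :: (real,'n::finite) vec measure)"
  unfolding unif_sphere_def by (rule prob_space.prob_space_distr[OF prob_B meas_f_B])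

lemma sets_S: "sets (unif_sphere :: (real,'n::finite) vec measure) = sets borel"
  by (simp add: unif_sphere_def)

lemma prob_X: "prob_space (unif_X :: ((real,'n::finite) vec \<times> (real,'n) vec) measure)"
  unfolding unif_X_def by (intro prob_space_pair prob_S)

lemma beta_nonneg:
  assumes "0 < \<eta>" "\<eta> < 1" shows "0 \<le> sqrt (9/8*(\<eta>^2 - \<eta>^4/4))"
proof -
  have e2: "\<eta>^2 \<le> 1" using assms by (simp add: abs_square_le_1)
  have "\<eta>^4 = \<eta>^2 * \<eta>^2" by simp
  also have "\<dots> \<le> \<eta>^2 * 1" by (rule mult_left_mono[OF e2]) simp
  finally have "\<eta>^4 \<le> \<eta>^2" by simp
  moreover have "0 \<le> \<eta>^2" by simp
  ultimately have "0 \<le> \<eta>^2 - \<eta>^4/4" by linarith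
  then show ?thesis by simp
qed

lemma S_cap:
  fixes w :: "(real,'n::finite) vec" and \<eta> \<beta> :: real
  assumes w: "norm w = 1 \<or> w = 0" and e: "0 < \<eta>" "\<eta> < 1" and \<beta>: "\<beta> = sqrt (9/8*(\<eta>^2 - \<eta>^4/4))"
  shows "measure unif_sphere {u. dist u w \<le> \<eta>} \<le> 3/2 * \<beta>^(CARD('n) - 1)"
proof -
  let ?B = "uniform_measure lborel (ball (0::(real,'n) vec) 1)"
  let ?C = "{x::(real,'n) vec. x \<in> ball 0 1 \<and> dist (x /\<^sub>R norm x) w \<le> \<eta>}"
  have Cb: "?C \<in> sets borel" by measurable
  have set1: "{u. dist u w \<le> \<eta>} \<in> sets borel" by measurable
  have "measure unif_sphere {u. dist u w \<le> \<eta>} = measure ?B ((\<lambda>x. x /\<^sub>R norm x) -` {u. dist u w \<le> \<eta>} \<inter> space ?B)"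
    unfolding unif_sphere_def by (rule measure_distr[OF meas_f_B set1])
  also have "\<dots> = measure lborel (ball 0 1 \<inter> ((\<lambda>x. x /\<^sub>R norm x) -` {u. dist u w \<le> \<eta>} \<inter> space ?B)) / measure lborel (ball (0::(real,'n) vec) 1)"
    by (rule measure_uniform_measure[OF ball_emeasure]) (simp add: Cb vimage_def)
  also have "ball 0 1 \<inter> ((\<lambda>x. x /\<^sub>R norm x) -` {u. dist u w \<le> \<eta>} \<inter> space ?B) = ?C" by auto
  finally have eq: "measure unif_sphere {u. dist u w \<le> \<eta>} = measure lborel ?C / measure lborel (ball (0::(real,'n) vec) 1)" .
  have b0: "0 \<le> \<beta>" using beta_nonneg[OF e] \<beta> by simp
  have V: "0 < measure lborel (ball (0::(real,'n) vec) 1)" by (rule ball_measure_pos)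
  from w show ?thesis
  proof
    assume "norm w = 1"
    then have "measure lborel ?C \<le> 3/2 * \<beta>^(CARD('n) - 1) * measure lborel (ball (0::(real,'n) vec) 1)"
      using cap_bound[OF _ e \<beta>] by simp
    then show ?thesis unfolding eq using V by (simp add: divide_le_eq)
  next
    assume w0: "w = 0"
    have "?C \<subseteq> {0}"
    proof
      fix x assume x: "x \<in> ?C"
      show "x \<in> {0}"
      proof (rule ccontr)
        assume "x \<notin> {0}"
        then have "dist (x /\<^sub>R norm x) w = 1" using w0 by simp
        then show False using x e by simp
      qed
    qed
    then have "measure lborel ?C \<le> measure lborel {0::(real,'n) vec}"
      by (intro measure_mono_fmeasurable) (auto simp: Cb fmeasurable_def)
    then have "measure lborel ?C = 0" by (simp add: measure_nonneg antisym)
    then show ?thesis unfolding eq using b0 by simp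
  qed
qed

lemma numeric_bound:
  assumes e: "0 < \<eta>" "\<eta> < 1" and D: "1 \<le> D" and \<beta>: "\<beta> = sqrt (9/8*(\<eta>^2 - \<eta>^4/4))"
  shows "(3/2 * \<beta>^D)^2 \<le> 2 * \<eta>^D"
proof -
  define q where "q = 9/8 * \<eta> * (1 - \<eta>^2/4)"
  have arg: "9/8*(\<eta>^2 - \<eta>^4/4) = \<eta> * q" by (simp add: q_def algebra_simps power2_eq_square power4_eq_xxxx)
  have t0: "0 \<le> 9/8*(\<eta>^2 - \<eta>^4/4)" using beta_nonneg[OF e] by simp
  have "\<beta>^2 = 9/8*(\<eta>^2 - \<eta>^4/4)" using t0 \<beta> by simp
  then have b2: "\<beta>^2 = \<eta> * q" using arg by simp
  have e2: "\<eta>^2 \<le> 1" using e by (simp add: abs_square_le_1)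
  have q0: "0 \<le> q"
  proof -
    have "0 \<le> 1 - \<eta>^2/4" using e2 by simp
    then show ?thesis using e by (simp add: q_def)
  qed
  have q1: "q \<le> 27/32"
  proof -
    have "0 \<le> (1 - \<eta>) * (3 - \<eta> - \<eta>^2)" using e
      using e2 by (intro mult_nonneg_nonneg) auto
    then have "\<eta> * (1 - \<eta>^2/4) \<le> 3/4" by (simp add: algebra_simps power2_eq_square power3_eq_cube)
    then show ?thesis by (simp add: q_def)
  qed
  have p: "(\<beta>^D)^2 = (\<beta>^2)^D" by (simp add: power_mult[symmetric] mult.commute)
  have "(3/2 * \<beta>^D)^2 = (3/2)^2 * (\<beta>^D)^2" by (rule power_mult_distrib)
  also have "\<dots> = 9/4 * (\<beta>^2)^D" unfolding p by (simp add: power2_eq_square)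
  also have "\<dots> = 9/4 * (\<eta>^D * q^D)" by (simp add: b2 power_mult_distrib)
  also have "\<dots> \<le> 9/4 * (\<eta>^D * q)"
  proof -
    have "q^D \<le> q^1" by (rule power_decreasing[OF D q0]) (use q1 in simp)
    then show ?thesis using e by (simp add: mult_left_mono)
  qed
  also have "\<dots> \<le> 9/4 * (\<eta>^D * (27/32))" using q1 e by (simp add: mult_left_mono)
  also have "\<dots> \<le> 2 * \<eta>^D" using e by simp
  finally show ?thesis .
qed



lemma sets_X: "sets (unif_X :: ((real,'n::finite) vec \<times> (real,'n) vec) measure) = sets borel"
proof -
  have "sets (unif_X :: ((real,'n::finite) vec \<times> (real,'n) vec) measure) = sets (borel \<Otimes>\<^sub>M borel)"
    unfolding unif_X_def by (rule sets_pair_measure_cong[OF sets_S sets_S])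
  then show ?thesis by (simp only: borel_prod)
qed

lemma sets_XX: "sets ((unif_X :: ((real,'n::finite) vec \<times> (real,'n) vec) measure) \<Otimes>\<^sub>M unif_X) = sets borel"
proof -
  have "sets ((unif_X :: ((real,'n::finite) vec \<times> (real,'n) vec) measure) \<Otimes>\<^sub>M unif_X) = sets (borel \<Otimes>\<^sub>M borel)"
    by (rule sets_pair_measure_cong[OF sets_X sets_X])
  then show ?thesis by (simp only: borel_prod)
qed

lemma D_sets: "{p :: ((real,'n::finite) vec \<times> (real,'n) vec) \<times> ((real,'n) vec \<times> (real,'n) vec). dist (fst p) (snd p) \<le> \<eta>}
   \<in> sets (unif_X \<Otimes>\<^sub>M unif_X)"
proof -
  have "closed {p :: ((real,'n::finite) vec \<times> (real,'n) vec) \<times> ((real,'n) vec \<times> (real,'n) vec). dist (fst p) (snd p) \<le> \<eta>}"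
    by (intro closed_Collect_le continuous_intros)
  then show ?thesis unfolding sets_XX by (rule borel_closed)
qed

lemma AE_S_R: "AE u in (unif_sphere :: (real,'n::finite) vec measure). norm u = 1 \<or> u = 0"
proof -
  have R: "{u \<in> space borel. norm (u::(real,'n) vec) = 1 \<or> u = 0} \<in> sets borel" by measurable
  show ?thesis unfolding unif_sphere_def
    by (subst AE_distr_iff[OF meas_f_B R]) (auto intro!: AE_I2)
qed

lemma AE_X_R: "AE a in (unif_X :: ((real,'n::finite) vec \<times> (real,'n) vec) measure).
    (norm (fst a) = 1 \<or> fst a = 0) \<and> (norm (snd a) = 1 \<or> snd a = 0)"
proof -
  interpret S: prob_space "unif_sphere :: (real,'n) vec measure" by (rule prob_S)
  interpret SS: pair_prob_space "unif_sphere :: (real,'n) vec measure" "unif_sphere :: (real,'n) vec measure"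
    by unfold_locales
  have m: "{x \<in> space ((unif_sphere :: (real,'n) vec measure) \<Otimes>\<^sub>M (unif_sphere :: (real,'n) vec measure)).
      (norm (fst x) = 1 \<or> fst x = 0) \<and> (norm (snd x) = 1 \<or> snd x = 0)} \<in> sets (unif_sphere \<Otimes>\<^sub>M unif_sphere)"
  proof -
    define R where "R = {u::(real,'n) vec. norm u = 1 \<or> u = 0}"
    have "R = sphere 0 1 \<union> {0}" by (auto simp: R_def)
    then have "closed R" by simp
    then have R: "R \<in> sets (unif_sphere :: (real,'n) vec measure)" unfolding sets_S by (rule borel_closed)
    have eq: "{x \<in> space ((unif_sphere :: (real,'n) vec measure) \<Otimes>\<^sub>M unif_sphere).
      (norm (fst x) = 1 \<or> fst x = 0) \<and> (norm (snd x) = 1 \<or> snd x = 0)} = R \<times> R"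
      by (auto simp: R_def space_pair_measure sets_S[THEN sets_eq_imp_space_eq])
    show ?thesis unfolding eq by (rule pair_measureI[OF R R])
  qed
  have "AE x in (unif_sphere :: (real,'n) vec measure). AE y in (unif_sphere :: (real,'n) vec measure).
      (norm (fst (x,y)) = 1 \<or> fst (x,y) = 0) \<and> (norm (snd (x,y)) = 1 \<or> snd (x,y) = 0)"
    using AE_S_R[where 'n='n]
  proof eventually_elim
    case (elim x)
    show ?case using AE_S_R[where 'n='n] by eventually_elim (use elim in simp)
  qed
  then show ?thesis unfolding unif_X_def by (rule SS.AE_pair_measure[OF m])
qed



lemma pair_bound:
  fixes \<eta> \<beta> :: real
  assumes e: "0 < \<eta>" "\<eta> < 1" and \<beta>: "\<beta> = sqrt (9/8*(\<eta>^2 - \<eta>^4/4))"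
  shows "measure ((unif_X :: ((real,'n::finite) vec \<times> (real,'n) vec) measure) \<Otimes>\<^sub>M unif_X)
           {p. dist (fst p) (snd p) \<le> \<eta>} \<le> (3/2 * \<beta>^(CARD('n) - 1)) * (3/2 * \<beta>^(CARD('n) - 1))"
proof -
  interpret S: prob_space "unif_sphere :: (real,'n) vec measure" by (rule prob_S)
  interpret X: prob_space "unif_X :: ((real,'n) vec \<times> (real,'n) vec) measure" by (rule prob_X)
  define K where "K = 3/2 * \<beta>^(CARD('n) - 1)"
  have K0: "0 \<le> K" using beta_nonneg[OF e] \<beta> by (simp add: K_def)
  let ?D = "{p :: ((real,'n) vec \<times> (real,'n) vec) \<times> ((real,'n) vec \<times> (real,'n) vec). dist (fst p) (snd p) \<le> \<eta>}"
  have capS: "measure (unif_sphere :: (real,'n) vec measure) (cball w \<eta>) \<le> K" if "norm w = 1 \<or> w = 0" for w :: "(real,'n) vec"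
  proof -
    have "cball w \<eta> = {u. dist u w \<le> \<eta>}" by (auto simp: cball_def dist_commute)
    then show ?thesis using S_cap[OF that e \<beta>] by (simp add: K_def)
  qed
  have cS: "cball w \<eta> \<in> sets (unif_sphere :: (real,'n) vec measure)" for w :: "(real,'n) vec"
    unfolding sets_S by simp
  have sec: "emeasure unif_X (Pair a -` ?D) \<le> ennreal (K*K)"
    if a: "(norm (fst a) = 1 \<or> fst a = 0) \<and> (norm (snd a) = 1 \<or> snd a = 0)" for a
  proof -
    obtain a1 a2 where a12: "a = (a1, a2)" by (cases a)
    have sub: "Pair a -` ?D \<subseteq> cball a1 \<eta> \<times> cball a2 \<eta>"
    proof
      fix b assume "b \<in> Pair a -` ?D"
      then have db: "dist a b \<le> \<eta>" by simp
      have "dist a1 (fst b) \<le> \<eta>" using dist_fst_le[of a b] db a12 by simp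
      moreover have "dist a2 (snd b) \<le> \<eta>" using dist_snd_le[of a b] db a12 by simp
      ultimately show "b \<in> cball a1 \<eta> \<times> cball a2 \<eta>" by (cases b) auto
    qed
    have "emeasure unif_X (Pair a -` ?D) \<le> emeasure unif_X (cball a1 \<eta> \<times> cball a2 \<eta>)"
      by (rule emeasure_mono[OF sub]) (simp add: unif_X_def cS)
    also have "\<dots> = emeasure unif_sphere (cball a1 \<eta>) * emeasure unif_sphere (cball a2 \<eta>)"
      unfolding unif_X_def by (rule S.emeasure_pair_measure_Times[OF cS cS])
    also have "\<dots> = ennreal (measure unif_sphere (cball a1 \<eta>)) * ennreal (measure unif_sphere (cball a2 \<eta>))"
      by (simp add: S.emeasure_eq_measure)
    also have "\<dots> \<le> ennreal K * ennreal K"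
      using capS[of a1] capS[of a2] a a12 by (intro mult_mono) (auto intro: ennreal_leI)
    also have "\<dots> = ennreal (K*K)" using K0 by (simp add: ennreal_mult)
    finally show ?thesis .
  qed
  have "emeasure ((unif_X :: ((real,'n) vec \<times> (real,'n) vec) measure) \<Otimes>\<^sub>M unif_X) ?D = (\<integral>\<^sup>+a. emeasure unif_X (Pair a -` ?D) \<partial>unif_X)"
    by (rule X.emeasure_pair_measure_alt[OF D_sets])
  also have "\<dots> \<le> (\<integral>\<^sup>+a. ennreal (K*K) \<partial>(unif_X :: ((real,'n) vec \<times> (real,'n) vec) measure))"
  proof (rule nn_integral_mono_AE)
    show "AE a in unif_X. emeasure unif_X (Pair a -` ?D) \<le> ennreal (K*K)"
      using AE_X_R[where 'n='n] by eventually_elim (rule sec)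
  qed
  also have "\<dots> = ennreal (K*K)" by (simp add: X.emeasure_space_1)
  finally have "emeasure ((unif_X :: ((real,'n) vec \<times> (real,'n) vec) measure) \<Otimes>\<^sub>M unif_X) ?D \<le> ennreal (K*K)" .
  then have "measure ((unif_X :: ((real,'n) vec \<times> (real,'n) vec) measure) \<Otimes>\<^sub>M unif_X) ?D \<le> K*K"
    unfolding measure_def using K0 by (intro enn2real_leI) auto
  then show ?thesis by (simp add: K_def)
qed



lemma marginal_distr:
  fixes i j m :: nat
  assumes ij: "i < m" "j < m" "i \<noteq> j"
  shows "distr (PiM {..<m} (\<lambda>_. (unif_X :: ((real,'n::finite) vec \<times> (real,'n) vec) measure)))
           (unif_X \<Otimes>\<^sub>M unif_X) (\<lambda>\<omega>. (\<omega> i, \<omega> j)) = unif_X \<Otimes>\<^sub>M unif_X"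
proof -
  let ?X = "unif_X :: ((real,'n::finite) vec \<times> (real,'n) vec) measure"
  let ?P = "PiM {..<m} (\<lambda>_. ?X)"
  let ?Pb = "PiM (UNIV :: bool set) (\<lambda>_. ?X)"
  define f where "f = (\<lambda>b::bool. if b then i else j)"
  define g :: "(nat \<Rightarrow> (real,'n) vec \<times> (real,'n) vec) \<Rightarrow> (bool \<Rightarrow> (real,'n) vec \<times> (real,'n) vec)"
    where "g = (\<lambda>\<omega>. \<lambda>n\<in>(UNIV::bool set). \<omega> (f n))"
  define h :: "(bool \<Rightarrow> (real,'n) vec \<times> (real,'n) vec) \<Rightarrow> ((real,'n) vec \<times> (real,'n) vec) \<times> ((real,'n) vec \<times> (real,'n) vec)"
    where "h = (\<lambda>x. (x True, x False))"
  have pX: "prob_space ?X" by (rule prob_X)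
  have injf: "inj_on f UNIV" using ij by (auto simp: inj_on_def f_def split: if_splits)
  have fK: "f \<in> UNIV \<rightarrow> {..<m}" using ij by (auto simp: f_def)
  have 1: "distr ?P ?Pb g = ?Pb"
    unfolding g_def using distr_PiM_reindex[of "{..<m}" "\<lambda>_. ?X" f UNIV, OF pX injf fK] by simp
  have cb: "case_bool ?X ?X = (\<lambda>_. ?X)" by (rule ext) (simp split: bool.split)
  have 2: "?X \<Otimes>\<^sub>M ?X = distr ?Pb (?X \<Otimes>\<^sub>M ?X) h"
    using pair_measure_eq_distr_PiM[of ?X ?X] pX unfolding cb h_def
    by (simp add: prob_space_imp_sigma_finite)
  have mg: "g \<in> measurable ?P ?Pb" unfolding g_def
    by (intro measurable_restrict measurable_component_singleton) (use fK in auto)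
  have mh: "h \<in> measurable ?Pb (?X \<Otimes>\<^sub>M ?X)" unfolding h_def
    by (intro measurable_Pair measurable_component_singleton) auto
  have comp: "h \<circ> g = (\<lambda>\<omega>. (\<omega> i, \<omega> j))" by (auto simp: h_def g_def f_def)
  have "distr ?P (?X \<Otimes>\<^sub>M ?X) (\<lambda>\<omega>. (\<omega> i, \<omega> j)) = distr (distr ?P ?Pb g) (?X \<Otimes>\<^sub>M ?X) h"
    by (subst distr_distr[OF mh mg]) (simp add: comp)
  also have "\<dots> = ?X \<Otimes>\<^sub>M ?X" using 1 2 by simp
  finally show ?thesis .
qed

lemma marginal_measure:
  fixes i j m :: nat
  assumes ij: "i < m" "j < m" "i \<noteq> j"
  shows "measure (PiM {..<m} (\<lambda>_. (unif_X :: ((real,'n::finite) vec \<times> (real,'n) vec) measure)))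
           {x \<in> space (PiM {..<m} (\<lambda>_. (unif_X :: ((real,'n) vec \<times> (real,'n) vec) measure))). dist (x i) (x j) \<le> \<eta>}
         = measure ((unif_X :: ((real,'n) vec \<times> (real,'n) vec) measure) \<Otimes>\<^sub>M unif_X) {p. dist (fst p) (snd p) \<le> \<eta>}"
    and "{x \<in> space (PiM {..<m} (\<lambda>_. (unif_X :: ((real,'n) vec \<times> (real,'n) vec) measure))). dist (x i) (x j) \<le> \<eta>}
         \<in> sets (PiM {..<m} (\<lambda>_. (unif_X :: ((real,'n) vec \<times> (real,'n) vec) measure)))"
proof -
  let ?X = "unif_X :: ((real,'n::finite) vec \<times> (real,'n) vec) measure"
  let ?P = "PiM {..<m} (\<lambda>_. ?X)"
  let ?D = "{p :: ((real,'n) vec \<times> (real,'n) vec) \<times> ((real,'n) vec \<times> (real,'n) vec). dist (fst p) (snd p) \<le> \<eta>}"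
  have m\<phi>: "(\<lambda>\<omega>. (\<omega> i, \<omega> j)) \<in> measurable ?P (?X \<Otimes>\<^sub>M ?X)"
    by (intro measurable_Pair measurable_component_singleton) (use ij in auto)
  have pre: "(\<lambda>\<omega>. (\<omega> i, \<omega> j)) -` ?D \<inter> space ?P = {x \<in> space ?P. dist (x i) (x j) \<le> \<eta>}" by auto
  have "measure (?X \<Otimes>\<^sub>M ?X) ?D = measure (distr ?P (?X \<Otimes>\<^sub>M ?X) (\<lambda>\<omega>. (\<omega> i, \<omega> j))) ?D"
    using marginal_distr[OF ij, where 'n='n] by simp
  also have "\<dots> = measure ?P ((\<lambda>\<omega>. (\<omega> i, \<omega> j)) -` ?D \<inter> space ?P)"
    by (rule measure_distr[OF m\<phi> D_sets])
  finally show "measure ?P {x \<in> space ?P. dist (x i) (x j) \<le> \<eta>} = measure (?X \<Otimes>\<^sub>M ?X) ?D"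
    using pre by simp
  show "{x \<in> space ?P. dist (x i) (x j) \<le> \<eta>} \<in> sets ?P"
  proof -
    have "((\<lambda>\<omega>. (\<omega> i, \<omega> j)) -` ?D \<inter> space ?P) \<in> sets ?P" by (rule measurable_sets[OF m\<phi> D_sets])
    then show ?thesis unfolding pre .
  qed
qed

lemma sum_lessThan_real: "2 * (\<Sum>j<m. real j) = real m * (real m - 1)"
  by (induction m) (auto simp: algebra_simps)


theorem lemma16:
  fixes m :: nat and \<eta> :: real
  assumes "CARD('n::finite) \<ge> 2" and "m \<ge> 2" and "0 < \<eta>" and "\<eta> < 1"
  shows "measure (PiM {..<m} (\<lambda>_. (unif_X :: ((real^'n) \<times> (real^'n)) measure)))
           {x \<in> space (PiM {..<m} (\<lambda>_. (unif_X :: ((real^'n) \<times> (real^'n)) measure))).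
              \<exists>i<m. \<exists>j<m. i \<noteq> j \<and> dist (x i) (x j) \<le> \<eta>}
         < real m ^ 2 * \<eta> ^ (CARD('n) - 1)"
proof -
  note card = assms(1) and m2 = assms(2) and e = assms(3,4)
  let ?X = "unif_X :: ((real,'n) vec \<times> (real,'n) vec) measure"
  let ?P = "PiM {..<m} (\<lambda>_. ?X)"
  define \<beta> where "\<beta> = sqrt (9/8*(\<eta>^2 - \<eta>^4/4))"
  define D where "D = CARD('n) - 1"
  define K where "K = 3/2 * \<beta>^D"
  define E where "E = (\<lambda>i j. {x \<in> space ?P. dist (x i) (x j) \<le> \<eta>})"
  define F where "F = (\<lambda>j. \<Union>i\<in>{..<j}. E i j)"
  interpret P: prob_space ?P by (rule prob_space_PiM) (rule prob_X)
  have D1: "1 \<le> D" using card by (simp add: D_def)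
  have Esets: "E i j \<in> sets ?P" if "i < m" "j < m" "i \<noteq> j" for i j
    unfolding E_def by (rule marginal_measure(2)[OF that])
  have Emeas: "measure ?P (E i j) \<le> K * K" if "i < m" "j < m" "i \<noteq> j" for i j
    unfolding E_def marginal_measure(1)[OF that] K_def D_def by (rule pair_bound[OF e \<beta>_def])
  have Fsets: "F j \<in> sets ?P" if "j < m" for j
    unfolding F_def using that by (intro sets.finite_UN) (auto intro: Esets)
  have seteq: "{x \<in> space ?P. \<exists>i<m. \<exists>j<m. i \<noteq> j \<and> dist (x i) (x j) \<le> \<eta>} = (\<Union>j\<in>{..<m}. F j)"
  proof
    show "{x \<in> space ?P. \<exists>i<m. \<exists>j<m. i \<noteq> j \<and> dist (x i) (x j) \<le> \<eta>} \<subseteq> (\<Union>j\<in>{..<m}. F j)"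
    proof
      fix x assume "x \<in> {x \<in> space ?P. \<exists>i<m. \<exists>j<m. i \<noteq> j \<and> dist (x i) (x j) \<le> \<eta>}"
      then obtain i j where x: "x \<in> space ?P" "i < m" "j < m" "i \<noteq> j" "dist (x i) (x j) \<le> \<eta>" by blast
      show "x \<in> (\<Union>j\<in>{..<m}. F j)"
      proof (cases "i < j")
        case True
        then show ?thesis using x by (auto simp: F_def E_def)
      next
        case False
        then have "j < i" using x(4) by simp
        then show ?thesis using x by (auto simp: F_def E_def dist_commute)
      qed
    qed
    show "(\<Union>j\<in>{..<m}. F j) \<subseteq> {x \<in> space ?P. \<exists>i<m. \<exists>j<m. i \<noteq> j \<and> dist (x i) (x j) \<le> \<eta>}"
    proof
      fix x assume "x \<in> (\<Union>j\<in>{..<m}. F j)"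
      then obtain i j where ij: "j < m" "i < j" "x \<in> space ?P" "dist (x i) (x j) \<le> \<eta>"
        by (auto simp: F_def E_def)
      then have "i < m" "i \<noteq> j" by auto
      with ij show "x \<in> {x \<in> space ?P. \<exists>i<m. \<exists>j<m. i \<noteq> j \<and> dist (x i) (x j) \<le> \<eta>}" by blast
    qed
  qed
  have Fmeas: "measure ?P (F j) \<le> real j * (K * K)" if "j < m" for j
  proof -
    have "measure ?P (F j) \<le> (\<Sum>i\<in>{..<j}. measure ?P (E i j))"
      unfolding F_def using that by (intro P.finite_measure_subadditive_finite) (auto intro: Esets)
    also have "\<dots> \<le> (\<Sum>i\<in>{..<j}. K * K)"
      using that by (intro sum_mono Emeas) auto
    also have "\<dots> = real j * (K * K)" by simp
    finally show ?thesis .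
  qed
  have "measure ?P {x \<in> space ?P. \<exists>i<m. \<exists>j<m. i \<noteq> j \<and> dist (x i) (x j) \<le> \<eta>}
        = measure ?P (\<Union>j\<in>{..<m}. F j)" by (simp only: seteq)
  also have "\<dots> \<le> (\<Sum>j\<in>{..<m}. measure ?P (F j))"
    by (intro P.finite_measure_subadditive_finite) (auto intro: Fsets)
  also have "\<dots> \<le> (\<Sum>j\<in>{..<m}. real j * (K * K))"
    by (intro sum_mono Fmeas) auto
  also have "\<dots> = (K * K) * (\<Sum>j<m. real j)" by (simp add: sum_distrib_left mult.commute)
  also have "\<dots> \<le> (2 * \<eta>^D) * (\<Sum>j<m. real j)"
  proof (rule mult_right_mono)
    show "K * K \<le> 2 * \<eta>^D" using numeric_bound[OF e D1 \<beta>_def] by (simp add: K_def power2_eq_square)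
    show "0 \<le> (\<Sum>j<m. real j)" by (simp add: sum_nonneg)
  qed
  also have "\<dots> = \<eta>^D * (real m * (real m - 1))" using sum_lessThan_real[of m] by simp
  also have "\<dots> < \<eta>^D * (real m * real m)"
  proof -
    have "0 < \<eta>^D" using e by simp
    moreover have "real m * (real m - 1) < real m * real m" using m2 by simp
    ultimately show ?thesis by simp
  qed
  also have "\<dots> = real m ^ 2 * \<eta> ^ (CARD('n) - 1)" by (simp add: D_def power2_eq_square)
  finally show ?thesis .
qed

end
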